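(* Let $f,g_1,\dots,g_m:\mathbb{R}^n\to\mathbb{R}$ be twice continuously differentiable convex functions on $\mathbb{R}^n_+$, $g=\mathrm{col}(g_1,\dots,g_m)$, $\bar n=n+m$, $\phi(x,y)=\mathrm{col}\big(\nabla f(x)+\sum_{i=1}^m y_i\nabla g_i(x),\ -g(x)\big)$ on $\mathbb{R}^{\bar n}_+$, and define $\psi:\mathbb{R}^{\bar n+1}_{++}\to\mathbb{R}^{\bar n+1}$ by $\psi(\bar x,\tau)=\mathrm{col}\big(\tau\phi(\bar x/\tau),\ -\bar x^\top\phi(\bar x/\tau)\big)$. Then the Jacobian $\nabla\psi(\hat x)$ is positive semidefinite (i.e. $d^\top\nabla\psi(\hat x)d\ge0$ for all $d$) for every $\hat x\in\mathbb{R}^{\bar n+1}_{++}$. Furthermore, $\psi$ is a continuous monotone mapping on $\mathbb{R}^{\bar n+1}_{++}$, i.e. $(\hat x^1-\hat x^2)^\top(\psi(\hat x^1)-\psi(\hat x^2))\ge0$ for all $\hat x^1,\hat x^2\in\mathbb{R}^{\bar n+1}_{++}$.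
   Context: $\mathbb{R}^{p}_{++}$ denotes the set of vectors with all components strictly positive. *)

theory Defs
  imports "HOL-Analysis.Analysis"
begin

text \<open>Closed and open nonnegative orthants of a Euclidean space
  (for product spaces such as R^n x R^m x R the basis is the union of the
  component bases, so this is the componentwise condition).\<close>
definition nonneg_orthant :: "'a::euclidean_space set" where
  "nonneg_orthant = {x. \<forall>b\<in>Basis. 0 \<le> x \<bullet> b}"

definition pos_orthant :: "'a::euclidean_space set" where
  "pos_orthant = {x. \<forall>b\<in>Basis. 0 < x \<bullet> b}"

definition grad :: "(real^'n \<Rightarrow> real) \<Rightarrow> real^'n \<Rightarrow> real^'n" where
  "grad f x = (\<chi> i. frechet_derivative f (at x) (axis i 1))"

definition twice_cont_diff :: "(real^'n \<Rightarrow> real) \<Rightarrow> bool" where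
  "twice_cont_diff f \<longleftrightarrow>
     (\<forall>x. f differentiable at x) \<and>
     (\<forall>x. grad f differentiable at x) \<and>
     (\<forall>v. continuous_on UNIV (\<lambda>x. frechet_derivative (grad f) (at x) v))"

definition phi :: "(real^'n \<Rightarrow> real) \<Rightarrow> ('m::finite \<Rightarrow> real^'n \<Rightarrow> real)
     \<Rightarrow> (real^'n) \<times> (real^'m) \<Rightarrow> (real^'n) \<times> (real^'m)" where
  "phi f g xy =
     (grad f (fst xy) + (\<Sum>i\<in>UNIV. (snd xy $ i) *\<^sub>R grad (g i) (fst xy)),
      - (\<chi> i. g i (fst xy)))"

definition psi :: "(real^'n \<Rightarrow> real) \<Rightarrow> ('m::finite \<Rightarrow> real^'n \<Rightarrow> real)
     \<Rightarrow> ((real^'n) \<times> (real^'m)) \<times> real \<Rightarrow> ((real^'n) \<times> (real^'m)) \<times> real" where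
  "psi f g xt =
     (snd xt *\<^sub>R phi f g ((1 / snd xt) *\<^sub>R fst xt),
      - (fst xt \<bullet> phi f g ((1 / snd xt) *\<^sub>R fst xt)))"

end

theory Submission
  imports Defs
begin

lemma grad_inner:
  fixes f :: "real^'n \<Rightarrow> real"
  assumes "(f has_derivative D) (at x)"
  shows "grad f x \<bullet> v = D v"
proof -
  have lin: "linear D" using assms has_derivative_linear by blast
  have "frechet_derivative f (at x) = D"
    using assms frechet_derivative_at by metis
  have "D v = D (\<Sum>i\<in>UNIV. (v$i) *s axis i 1)" by (simp add: basis_expansion)
  also have "\<dots> = (\<Sum>i\<in>UNIV. (v$i) * D (axis i 1))"
    using lin by (simp add: linear_sum linear_scale scalar_mult_eq_scaleR)
  finally show ?thesis
    using \<open>frechet_derivative f (at x) = D\<close>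
    by (simp add: grad_def inner_vec_def mult.commute)
qed

lemma pos_orthant_prod: "(x::'a::euclidean_space \<times> 'b::euclidean_space) \<in> pos_orthant \<longleftrightarrow> fst x \<in> pos_orthant \<and> snd x \<in> pos_orthant"
  by (cases x) (simp add: pos_orthant_def Basis_prod_def ball_Un)

lemma nonneg_orthant_prod: "(x::'a::euclidean_space \<times> 'b::euclidean_space) \<in> nonneg_orthant \<longleftrightarrow> fst x \<in> nonneg_orthant \<and> snd x \<in> nonneg_orthant"
  by (cases x) (simp add: nonneg_orthant_def Basis_prod_def ball_Un)

lemma pos_orthant_real: "(x::real) \<in> pos_orthant \<longleftrightarrow> x > 0"
  by (auto simp: pos_orthant_def)

lemma pos_orthant_vec: "(x::real^'n) \<in> pos_orthant \<longleftrightarrow> (\<forall>i. x$i > 0)"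
  by (auto simp: pos_orthant_def Basis_vec_def inner_axis)

lemma nonneg_orthant_vec: "(x::real^'n) \<in> nonneg_orthant \<longleftrightarrow> (\<forall>i. x$i \<ge> 0)"
  by (auto simp: nonneg_orthant_def Basis_vec_def inner_axis)

lemma open_pos_orthant: "open (pos_orthant :: 'a::euclidean_space set)"
proof -
  have "pos_orthant = (\<Inter>b\<in>Basis. {x::'a. inner b x > 0})"
    by (auto simp: pos_orthant_def inner_commute)
  moreover have "open (\<Inter>b\<in>Basis. {x::'a. inner b x > 0})"
    by (intro open_INT finite_Basis ballI open_halfspace_gt)
  ultimately show ?thesis by simp
qed

lemma grad_ineq:
  fixes f :: "real^'n \<Rightarrow> real"
  assumes cvx: "convex_on S f" and x: "x \<in> S" and y: "y \<in> S"
    and d: "f differentiable at x"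
  shows "f x + grad f x \<bullet> (y - x) \<le> f y"
proof -
  obtain D where D: "(f has_derivative D) (at x)" using d differentiable_def by blast
  have lin: "linear D" using D has_derivative_linear by blast
  let ?h = "\<lambda>t::real. f (x + t *\<^sub>R (y - x))"
  have g: "((\<lambda>t::real. x + t *\<^sub>R (y-x)) has_derivative (\<lambda>t. t *\<^sub>R (y-x))) (at 0)"
    by (auto intro!: derivative_eq_intros)
  have D': "(f has_derivative D) (at (x + (0::real) *\<^sub>R (y-x)))" using D by simp
  have "(?h has_derivative (\<lambda>t. D (t *\<^sub>R (y - x)))) (at 0)"
    using has_derivative_compose[OF g D'] by simp
  hence "(?h has_field_derivative D (y - x)) (at 0)"
    by (rule has_derivative_imp_has_field_derivative) (simp add: linear_scale[OF lin])
  hence "((\<lambda>t. (?h t - ?h 0) / (t - 0)) \<longlongrightarrow> D (y - x)) (at 0)"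
    by (simp add: has_field_derivative_iff)
  hence lim: "((\<lambda>t. (?h t - ?h 0) / (t - 0)) \<longlongrightarrow> D (y - x)) (at_right 0)"
    by (rule filterlim_mono) (auto simp: at_le)
  have ev: "\<forall>\<^sub>F t in at_right 0. (?h t - ?h 0) / (t - 0) \<le> f y - f x"
  proof -
    have "\<forall>\<^sub>F t in at_right (0::real). t < 1" unfolding eventually_at_right_field
      by (intro exI[of _ 1]) auto
    moreover have "\<forall>\<^sub>F t in at_right (0::real). t > 0" by (simp add: eventually_at_right_less)
    ultimately show ?thesis
    proof eventually_elim
      case (elim t)
      have "x + t *\<^sub>R (y - x) = (1 - t) *\<^sub>R x + t *\<^sub>R y" by (simp add: algebra_simps)
      hence "?h t \<le> (1 - t) * f x + t * f y"
        using convex_onD[OF cvx, of t x y] elim x y by simp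
      hence "?h t - ?h 0 \<le> t * (f y - f x)" by (simp add: algebra_simps)
      thus ?case using elim by (simp add: divide_le_eq mult.commute)
    qed
  qed
  have "D (y - x) \<le> f y - f x"
    by (rule tendsto_upperbound[OF lim ev]) simp
  thus ?thesis using grad_inner[OF D] by simp
qed

lemma phi_mono:
  fixes f :: "real^'n \<Rightarrow> real" and g :: "'m::finite \<Rightarrow> real^'n \<Rightarrow> real"
  assumes cf: "convex_on nonneg_orthant f" and cg: "\<And>i. convex_on nonneg_orthant (g i)"
    and df: "\<And>x. f differentiable at x" and dg: "\<And>i x. g i differentiable at x"
    and x1: "x1 \<in> nonneg_orthant" and x2: "x2 \<in> nonneg_orthant"
    and y1: "\<And>i. y1 $ i \<ge> 0" and y2: "\<And>i. y2 $ i \<ge> 0"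
  shows "0 \<le> ((x1, y1) - (x2, y2)) \<bullet> (phi f g (x1, y1) - phi f g (x2, y2))"
proof -
  have F1: "f x1 + grad f x1 \<bullet> (x2 - x1) \<le> f x2" by (rule grad_ineq[OF cf x1 x2 df])
  have F2: "f x2 + grad f x2 \<bullet> (x1 - x2) \<le> f x1" by (rule grad_ineq[OF cf x2 x1 df])
  have G1: "g i x1 + grad (g i) x1 \<bullet> (x2 - x1) \<le> g i x2" for i by (rule grad_ineq[OF cg x1 x2 dg])
  have G2: "g i x2 + grad (g i) x2 \<bullet> (x1 - x2) \<le> g i x1" for i by (rule grad_ineq[OF cg x2 x1 dg])
  have fpart: "0 \<le> (x1 - x2) \<bullet> (grad f x1 - grad f x2)"
    using F1 F2 by (simp add: inner_diff_left inner_diff_right inner_commute)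
  have gterm: "0 \<le> y1 $ i * (grad (g i) x1 \<bullet> (x1 - x2) - (g i x1 - g i x2))
     + y2 $ i * ((g i x1 - g i x2) - grad (g i) x2 \<bullet> (x1 - x2))" for i
  proof -
    have a: "0 \<le> grad (g i) x1 \<bullet> (x1 - x2) - (g i x1 - g i x2)"
      using G1[of i] by (simp add: inner_diff_left inner_diff_right inner_commute)
    have b: "0 \<le> (g i x1 - g i x2) - grad (g i) x2 \<bullet> (x1 - x2)"
      using G2[of i] by simp
    show ?thesis using mult_nonneg_nonneg[OF y1[of i] a] mult_nonneg_nonneg[OF y2[of i] b] by linarith
  qed
  have eq: "((x1, y1) - (x2, y2)) \<bullet> (phi f g (x1, y1) - phi f g (x2, y2)) =
     (x1 - x2) \<bullet> (grad f x1 - grad f x2) +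
     (\<Sum>i\<in>UNIV. y1 $ i * (grad (g i) x1 \<bullet> (x1 - x2) - (g i x1 - g i x2))
     + y2 $ i * ((g i x1 - g i x2) - grad (g i) x2 \<bullet> (x1 - x2)))"
  proof -
    let ?d = "x1 - x2"
    have e1: "?d \<bullet> (\<Sum>i\<in>UNIV. c $ i *\<^sub>R v i) = (\<Sum>i\<in>UNIV. c $ i * (v i \<bullet> ?d))" for c v
      by (simp add: inner_sum_right inner_commute)
    have e2: "(y1 - y2) \<bullet> (- (\<chi> i. g i x1) - - (\<chi> i. g i x2)) = (\<Sum>i\<in>UNIV. (y1$i - y2$i)*(g i x2 - g i x1))"
      by (simp add: inner_vec_def algebra_simps)
    have "((x1, y1) - (x2, y2)) \<bullet> (phi f g (x1, y1) - phi f g (x2, y2)) =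
      ?d \<bullet> (grad f x1 - grad f x2) + ?d \<bullet> (\<Sum>i\<in>UNIV. y1 $ i *\<^sub>R grad (g i) x1)
      - ?d \<bullet> (\<Sum>i\<in>UNIV. y2 $ i *\<^sub>R grad (g i) x2)
      + (y1 - y2) \<bullet> (- (\<chi> i. g i x1) - - (\<chi> i. g i x2))"
      by (simp add: phi_def inner_diff_right inner_add_right)
    also have "\<dots> = ?d \<bullet> (grad f x1 - grad f x2) + (\<Sum>i\<in>UNIV. y1 $ i * (grad (g i) x1 \<bullet> ?d))
      - (\<Sum>i\<in>UNIV. y2 $ i * (grad (g i) x2 \<bullet> ?d))
      + (\<Sum>i\<in>UNIV. (y1$i - y2$i)*(g i x2 - g i x1))"
      unfolding e1 e2 ..
    also have "\<dots> = ?d \<bullet> (grad f x1 - grad f x2) +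
     (\<Sum>i\<in>UNIV. y1 $ i * (grad (g i) x1 \<bullet> (x1 - x2) - (g i x1 - g i x2))
     + y2 $ i * ((g i x1 - g i x2) - grad (g i) x2 \<bullet> (x1 - x2)))"
    proof -
      have "(\<Sum>i\<in>UNIV. y1 $ i * (grad (g i) x1 \<bullet> (x1 - x2) - (g i x1 - g i x2))
         + y2 $ i * ((g i x1 - g i x2) - grad (g i) x2 \<bullet> (x1 - x2))) =
        (\<Sum>i\<in>UNIV. y1 $ i * (grad (g i) x1 \<bullet> ?d) - y2 $ i * (grad (g i) x2 \<bullet> ?d)
          + (y1$i - y2$i)*(g i x2 - g i x1))"
        by (rule sum.cong) (simp_all add: algebra_simps)
      then show ?thesis by (simp add: sum.distrib sum_subtractf)
    qed
    finally show ?thesis .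
  qed
  show ?thesis unfolding eq using fpart gterm by (simp add: sum_nonneg)
qed

lemma homog_identity:
  fixes \<Phi> :: "'a::real_inner \<Rightarrow> 'a"
  assumes t1: "t1 > 0" and t2: "t2 > 0"
  shows "((xb1, t1) - (xb2, t2)) \<bullet>
     ((t1 *\<^sub>R \<Phi> ((1/t1) *\<^sub>R xb1), - (xb1 \<bullet> \<Phi> ((1/t1) *\<^sub>R xb1))) -
      (t2 *\<^sub>R \<Phi> ((1/t2) *\<^sub>R xb2), - (xb2 \<bullet> \<Phi> ((1/t2) *\<^sub>R xb2))))
   = t1 * t2 * (((1/t1) *\<^sub>R xb1 - (1/t2) *\<^sub>R xb2) \<bullet> (\<Phi> ((1/t1) *\<^sub>R xb1) - \<Phi> ((1/t2) *\<^sub>R xb2)))"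
proof -
  define u1 where "u1 = (1/t1) *\<^sub>R xb1"
  define u2 where "u2 = (1/t2) *\<^sub>R xb2"
  have x1: "xb1 = t1 *\<^sub>R u1" using t1 by (simp add: u1_def)
  have x2: "xb2 = t2 *\<^sub>R u2" using t2 by (simp add: u2_def)
  show ?thesis unfolding u1_def[symmetric] u2_def[symmetric] unfolding x1 x2
    by (simp add: inner_diff_left inner_diff_right algebra_simps)
qed

lemma vec_as_sum: "(\<chi> i. h i) = (\<Sum>i\<in>UNIV. h i *\<^sub>R axis i (1::real))"
  using basis_expansion[of "\<chi> i. h i", symmetric] by (simp add: scalar_mult_eq_scaleR)

lemma phi_diff:
  fixes f :: "real^'n \<Rightarrow> real" and g :: "'m::finite \<Rightarrow> real^'n \<Rightarrow> real"
  assumes df: "\<And>x. f differentiable at x" and dg: "\<And>i x. g i differentiable at x"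
    and dgf: "\<And>x. grad f differentiable at x" and dgg: "\<And>i x. grad (g i) differentiable at x"
  shows "phi f g differentiable at u"
proof -
  have e: "phi f g = (\<lambda>xy. (grad f (fst xy) + (\<Sum>i\<in>UNIV. (snd xy $ i) *\<^sub>R grad (g i) (fst xy)),
      - (\<Sum>i\<in>UNIV. g i (fst xy) *\<^sub>R axis i (1::real))))"
    by (rule ext) (simp add: phi_def vec_as_sum[symmetric])
  have fst_d: "fst differentiable at u" by (simp add: bounded_linear_fst bounded_linear_imp_differentiable)
  have snd_d: "snd differentiable at u" by (simp add: bounded_linear_snd bounded_linear_imp_differentiable)
  have a: "(\<lambda>xy. grad f (fst xy)) differentiable at u"
    by (rule differentiable_compose[OF dgf fst_d])
  have b: "(\<lambda>xy. grad (g i) (fst xy)) differentiable at u" for i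
    by (rule differentiable_compose[OF dgg fst_d])
  have c: "(\<lambda>xy. g i (fst xy)) differentiable at u" for i
    by (rule differentiable_compose[OF dg fst_d])
  have sn: "(\<lambda>xy. snd xy $ i) differentiable at u" for i
  proof -
    have "bounded_linear (\<lambda>xy::(real^'n) \<times> (real^'m). snd xy $ i)"
      using bounded_linear_compose[OF bounded_linear_vec_nth[of i] bounded_linear_snd] by (simp add: o_def)
    thus ?thesis by (rule bounded_linear_imp_differentiable)
  qed
  have d1: "(\<lambda>xy. (\<Sum>i\<in>UNIV. (snd xy $ i) *\<^sub>R grad (g i) (fst xy))) differentiable at u"
    using sn b by (intro differentiable_sum) (auto intro: differentiable_scaleR)
  have d2: "(\<lambda>xy. (\<Sum>i\<in>UNIV. g i (fst xy) *\<^sub>R axis i (1::real))) differentiable at u"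
    using c by (intro differentiable_sum) (auto intro: differentiable_scaleR)
  show ?thesis unfolding e
    by (rule differentiable_Pair) (use a d1 d2 in auto)
qed

theorem lemma7:
  fixes f :: "real^'n \<Rightarrow> real" and g :: "'m::finite \<Rightarrow> real^'n \<Rightarrow> real"
  assumes "twice_cont_diff f" and "convex_on nonneg_orthant f"
    and "\<And>i. twice_cont_diff (g i)" and "\<And>i. convex_on nonneg_orthant (g i)"
  shows "(\<forall>xh \<in> pos_orthant. psi f g differentiable at xh \<and>
            (\<forall>d. 0 \<le> d \<bullet> frechet_derivative (psi f g) (at xh) d))
       \<and> continuous_on pos_orthant (psi f g)
       \<and> (\<forall>x1 \<in> pos_orthant. \<forall>x2 \<in> pos_orthant.
            0 \<le> (x1 - x2) \<bullet> (psi f g x1 - psi f g x2))"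
proof -
  have df: "\<And>x. f differentiable at x" and dgf: "\<And>x. grad f differentiable at x"
    using assms(1) by (auto simp: twice_cont_diff_def)
  have dg: "\<And>i x. g i differentiable at x" and dgg: "\<And>i x. grad (g i) differentiable at x"
    using assms(3) by (auto simp: twice_cont_diff_def)
  have phid: "\<And>u. phi f g differentiable at u" by (rule phi_diff[OF df dg dgf dgg])
  have mono: "0 \<le> (x1 - x2) \<bullet> (psi f g x1 - psi f g x2)"
    if x1: "x1 \<in> pos_orthant" and x2: "x2 \<in> pos_orthant" for x1 x2
  proof -
    obtain xb1 t1 where e1: "x1 = (xb1, t1)" by (cases x1)
    obtain xb2 t2 where e2: "x2 = (xb2, t2)" by (cases x2)
    obtain a1 b1 where xb1: "xb1 = (a1, b1)" by (cases xb1)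
    obtain a2 b2 where xb2: "xb2 = (a2, b2)" by (cases xb2)
    have p1: "t1 > 0" "\<And>i. a1 $ i > 0" "\<And>i. b1 $ i > 0"
      using x1 by (auto simp: e1 xb1 pos_orthant_prod pos_orthant_real pos_orthant_vec)
    have p2: "t2 > 0" "\<And>i. a2 $ i > 0" "\<And>i. b2 $ i > 0"
      using x2 by (auto simp: e2 xb2 pos_orthant_prod pos_orthant_real pos_orthant_vec)
    have "0 \<le> ((1/t1) *\<^sub>R xb1 - (1/t2) *\<^sub>R xb2) \<bullet> (phi f g ((1/t1) *\<^sub>R xb1) - phi f g ((1/t2) *\<^sub>R xb2))"
      unfolding xb1 xb2 scaleR_Pair
      by (rule phi_mono[OF assms(2) assms(4) df dg])
        (use p1 p2 in \<open>auto simp: nonneg_orthant_vec less_imp_le\<close>)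
    hence "0 \<le> t1 * t2 * (((1/t1) *\<^sub>R xb1 - (1/t2) *\<^sub>R xb2) \<bullet> (phi f g ((1/t1) *\<^sub>R xb1) - phi f g ((1/t2) *\<^sub>R xb2)))"
      using p1 p2 by simp
    thus ?thesis unfolding e1 e2 psi_def fst_conv snd_conv
      by (subst homog_identity[OF p1(1) p2(1)])
  qed
  have diff: "psi f g differentiable at xh" if xh: "xh \<in> pos_orthant" for xh
  proof -
    have t: "snd xh \<noteq> 0" using xh by (auto simp: pos_orthant_prod pos_orthant_real)
    have fst_d: "fst differentiable at xh" by (simp add: bounded_linear_fst bounded_linear_imp_differentiable)
    have snd_d: "snd differentiable at xh" by (simp add: bounded_linear_snd bounded_linear_imp_differentiable)
    have u: "(\<lambda>xt. (1 / snd xt) *\<^sub>R fst xt) differentiable at xh"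
      using t fst_d snd_d by (intro differentiable_scaleR differentiable_divide) auto
    have ph: "(\<lambda>xt. phi f g ((1 / snd xt) *\<^sub>R fst xt)) differentiable at xh"
      by (rule differentiable_compose[OF phid u])
    have "(\<lambda>xt. (snd xt *\<^sub>R phi f g ((1 / snd xt) *\<^sub>R fst xt),
      - (fst xt \<bullet> phi f g ((1 / snd xt) *\<^sub>R fst xt)))) differentiable at xh"
      using ph fst_d snd_d by (intro differentiable_Pair differentiable_scaleR differentiable_minus differentiable_inner)
    thus ?thesis by (simp add: psi_def[abs_def])
  qed
  have psd: "0 \<le> d \<bullet> frechet_derivative (psi f g) (at xh) d" if xh: "xh \<in> pos_orthant" for xh d
  proof -
    define D where "D = frechet_derivative (psi f g) (at xh)"
    have D: "(psi f g has_derivative D) (at xh)" using diff[OF xh] frechet_derivative_works D_def by blast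
    have lin: "linear D" using D has_derivative_linear by blast
    let ?h = "\<lambda>t::real. d \<bullet> psi f g (xh + t *\<^sub>R d)"
    have gd: "((\<lambda>t::real. xh + t *\<^sub>R d) has_derivative (\<lambda>t. t *\<^sub>R d)) (at 0)"
      by (auto intro!: derivative_eq_intros)
    have D': "(psi f g has_derivative D) (at (xh + (0::real) *\<^sub>R d))" using D by simp
    have "(?h has_derivative (\<lambda>t. d \<bullet> D (t *\<^sub>R d))) (at 0)"
      using has_derivative_compose[OF gd D'] by (auto intro!: derivative_eq_intros)
    hence "(?h has_field_derivative d \<bullet> D d) (at 0)"
      by (rule has_derivative_imp_has_field_derivative) (simp add: linear_scale[OF lin])
    hence "((\<lambda>t. (?h t - ?h 0) / (t - 0)) \<longlongrightarrow> d \<bullet> D d) (at 0)"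
      by (simp add: has_field_derivative_iff)
    hence lim: "((\<lambda>t. (?h t - ?h 0) / (t - 0)) \<longlongrightarrow> d \<bullet> D d) (at_right 0)"
      by (rule filterlim_mono) (auto simp: at_le)
    have tl: "((\<lambda>t::real. xh + t *\<^sub>R d) \<longlongrightarrow> xh + 0 *\<^sub>R d) (at_right 0)"
      by (intro tendsto_intros)
    have "\<forall>\<^sub>F t in at_right (0::real). xh + t *\<^sub>R d \<in> pos_orthant"
      using topological_tendstoD[OF tl open_pos_orthant] xh by simp
    moreover have "\<forall>\<^sub>F t in at_right (0::real). t > 0" by (simp add: eventually_at_right_less)
    ultimately have ev: "\<forall>\<^sub>F t in at_right 0. 0 \<le> (?h t - ?h 0) / (t - 0)"
    proof eventually_elim
      case (elim t)
      have "0 \<le> ((xh + t *\<^sub>R d) - xh) \<bullet> (psi f g (xh + t *\<^sub>R d) - psi f g xh)"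
        by (rule mono[OF elim(1) xh])
      hence "0 \<le> t * (?h t - ?h 0)" by (simp add: inner_diff_right right_diff_distrib)
      hence "0 \<le> ?h t - ?h 0" using elim(2) by (simp add: zero_le_mult_iff)
      thus ?case using elim(2) by simp
    qed
    have "0 \<le> d \<bullet> D d"
      by (rule tendsto_lowerbound[OF lim ev]) simp
    thus ?thesis by (simp add: D_def)
  qed
  have cont: "continuous_on pos_orthant (psi f g)"
    using diff by (meson continuous_at_imp_continuous_on differentiable_imp_continuous_within)
  show ?thesis using diff psd cont mono by blast
qed

end
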